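(* Let $\mathbf M=(M,\vee_{\mathbf M},(\sqsubseteq^n_{\mathbf M})_{n\ge1})$ be a multi-argument specialization semilattice, let $M^{<\omega}$ be the set of finite subsets of $M$, and define on $M\times M^{<\omega}$ the relations $\precsim$ and $\sim$ as in the context. Then: (i) $\precsim$ is reflexive and transitive on $M\times M^{<\omega}$, hence $\sim$ is an equivalence relation. (ii) The operation $K[a,\{b_1,\dots,b_h\}]=[a,\{a\vee_{\mathbf M}b_1\vee_{\mathbf M}\dots\vee_{\mathbf M}b_h\}]$ on $\sim$-classes is well defined (here $[\cdot]$ denotes $\sim$-class). (iii) $\sim$ is a congruence of the semilattice $(M,\vee_{\mathbf M})\times(M^{<\omega},\cup)$, so the quotient $\widetilde M=(M\times M^{<\omega})/\!\sim$ inherits a semilattice operation $\vee$, given by $[a,\{b_1,\dots,b_h\}]\vee[c,\{d_1,\dots,d_k\}]=[a\vee_{\mathbf M}c,\{b_1,\dots,b_h,d_1,\dots,d_k\}]$; moreover, with $\le$ the order induced by $\vee$, $[a,\{b_1,\dots,b_h\}]\le[c,\{d_1,\dots,d_k\}]$ if and only if $(a,\{b_1,\dots,b_h\})\precsim(c,\{d_1,\dots,d_k\})$.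
   Context: A multi-argument specialization semilattice is a join semilattice $(M,\vee)$ (order $a\le b$ iff $a\vee b=b$) with, for each $n\ge1$, an $(n+1)$-ary relation $a\sqsubseteq^n b_1,\dots,b_n$ (also written $a\sqsubseteq b_1,\dots,b_n$) such that: (M1) $a\sqsubseteq a$; (M2) $a\sqsubseteq b_1,\dots,b_n$ and $b_1\sqsubseteq c$ imply $a\sqsubseteq c,b_2,\dots,b_n$; (M3) $a\le b$ and $b\sqsubseteq c_1,\dots,c_m$ imply $a\sqsubseteq c_1,\dots,c_m$; (M4) $a\sqsubseteq b_1,\dots,b_n$ implies $a\sqsubseteq b_{\sigma1},\dots,b_{\sigma n}$ for every permutation $\sigma$; (M5) $a\sqsubseteq b_1,\dots,b_n,b_n$ implies $a\sqsubseteq b_1,\dots,b_n$; (M6) $a\sqsubseteq b_1,\dots,b_n$ implies $a\sqsubseteq b_1,\dots,b_n,b_{n+1}$; (M7) $a\sqsubseteq b_1,\dots,b_n$ and $a_1\sqsubseteq b_1,\dots,b_n$ imply $a\vee a_1\sqsubseteq b_1,\dots,b_n$. Define $(a,\{b_1,\dots,b_h\})\precsim(c,\{d_1,\dots,d_k\})$ iff both: (a1) there is $d\in M$ with $d\sqsubseteq_{\mathbf M}d_1,\dots,d_k$ and $a\le_{\mathbf M}c\vee_{\mathbf M}d$ (when $k=0$, i.e. the set $\{d_1,\dots,d_k\}$ is empty, this clause reads simply $a\le_{\mathbf M}c$); and (a2) for every $i\le h$ there is $j\le k$ with $b_i\sqsubseteq^1_{\mathbf M}d_j$. Define $x\sim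 y$ iff $x\precsim y$ and $y\precsim x$. *)

theory Defs
  imports Main "HOL-Library.Multiset"
begin

text \<open>A multi-argument specialization semilattice: the join semilattice is the
type class semilattice_sup (order: a \<le> b iff sup a b = b); the relation
a \<sqsubseteq>^n b1,...,bn is spec a [b1,...,bn] for nonempty lists (n = length).
The value of spec on the empty list is irrelevant and never used.\<close>

definition mss :: "('a::semilattice_sup \<Rightarrow> 'a list \<Rightarrow> bool) \<Rightarrow> bool" where
  "mss spec \<longleftrightarrow>
     (\<forall>a. spec a [a]) \<and>
     (\<forall>a b bs c. spec a (b # bs) \<longrightarrow> spec b [c] \<longrightarrow> spec a (c # bs)) \<and>
     (\<forall>a b cs. cs \<noteq> [] \<longrightarrow> a \<le> b \<longrightarrow> spec b cs \<longrightarrow> spec a cs) \<and>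
     (\<forall>a bs cs. bs \<noteq> [] \<longrightarrow> mset cs = mset bs \<longrightarrow> spec a bs \<longrightarrow> spec a cs) \<and>
     (\<forall>a bs b. spec a (bs @ [b, b]) \<longrightarrow> spec a (bs @ [b])) \<and>
     (\<forall>a bs b. bs \<noteq> [] \<longrightarrow> spec a bs \<longrightarrow> spec a (bs @ [b])) \<and>
     (\<forall>a a1 bs. bs \<noteq> [] \<longrightarrow> spec a bs \<longrightarrow> spec a1 bs \<longrightarrow> spec (sup a a1) bs)"

definition finpairs :: "('a \<times> 'a set) set" where
  "finpairs = {(a, B). finite B}"

definition mss_le :: "('a::semilattice_sup \<Rightarrow> 'a list \<Rightarrow> bool) \<Rightarrow> 'a \<times> 'a set \<Rightarrow> 'a \<times> 'a set \<Rightarrow> bool" where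
  "mss_le spec x y =
     (case x of (a, B) \<Rightarrow> case y of (c, D) \<Rightarrow>
        (if D = {} then a \<le> c
         else (\<exists>d ds. set ds = D \<and> distinct ds \<and> spec d ds \<and> a \<le> sup c d)) \<and>
        (\<forall>b\<in>B. \<exists>d\<in>D. spec b [d]))"

definition mss_sim :: "('a::semilattice_sup \<Rightarrow> 'a list \<Rightarrow> bool) \<Rightarrow> (('a \<times> 'a set) \<times> ('a \<times> 'a set)) set" where
  "mss_sim spec = {(x, y). x \<in> finpairs \<and> y \<in> finpairs \<and> mss_le spec x y \<and> mss_le spec y x}"

definition mss_K :: "'a::semilattice_sup \<times> 'a set \<Rightarrow> 'a \<times> 'a set" where
  "mss_K x = (case x of (a, B) \<Rightarrow> (a, {Finite_Set.fold sup a B}))"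

definition mss_join :: "'a::semilattice_sup \<times> 'a set \<Rightarrow> 'a \<times> 'a set \<Rightarrow> 'a \<times> 'a set" where
  "mss_join x y = (case x of (a, B) \<Rightarrow> case y of (c, D) \<Rightarrow> (sup a c, B \<union> D))"

end

theory Submission
  imports Defs
begin

lemma l1: "(x::'b::semilattice_sup) \<le> sup y z \<Longrightarrow> y \<le> sup u v \<Longrightarrow> x \<le> sup u (sup v z)"
  by (metis sup.absorb_iff1 sup_assoc)
lemma l2: "(a::'b::semilattice_sup) \<le> sup a' d \<Longrightarrow> c \<le> c' \<Longrightarrow> sup a c \<le> sup (sup a' c') d"
  by (metis sup_commute sup_left_commute sup_mono)
lemma l3: "(a::'b::semilattice_sup) \<le> a' \<Longrightarrow> c \<le> sup c' d \<Longrightarrow> sup a c \<le> sup (sup a' c') d"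
  by (metis sup_mono sup_assoc)
lemma l4: "(a::'b::semilattice_sup) \<le> sup a' d \<Longrightarrow> c \<le> sup c' f \<Longrightarrow> sup a c \<le> sup (sup a' c') (sup d f)"
  by (metis sup_assoc sup_commute sup_mono)
lemma l0: "(x::'b::semilattice_sup) \<le> sup y d \<Longrightarrow> y \<le> e \<Longrightarrow> x \<le> sup e d"
  using order_trans sup_mono order_refl by metis

locale mssl =
  fixes spec :: "'a::semilattice_sup \<Rightarrow> 'a list \<Rightarrow> bool"
  assumes mss: "mss spec"
begin

lemmas mssD = mss[unfolded mss_def]

lemma M1: "spec a [a]"
  by (rule mssD[THEN conjunct1, rule_format])
lemma M2: "spec a (b#bs) \<Longrightarrow> spec b [c] \<Longrightarrow> spec a (c#bs)"
  by (rule mssD[THEN conjunct2, THEN conjunct1, rule_format])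
lemma M3: "cs \<noteq> [] \<Longrightarrow> a \<le> b \<Longrightarrow> spec b cs \<Longrightarrow> spec a cs"
  by (rule mssD[THEN conjunct2, THEN conjunct2, THEN conjunct1, rule_format])
lemma M4: "bs \<noteq> [] \<Longrightarrow> mset cs = mset bs \<Longrightarrow> spec a bs \<Longrightarrow> spec a cs"
  by (rule mssD[THEN conjunct2, THEN conjunct2, THEN conjunct2, THEN conjunct1, rule_format])
lemma M5: "spec a (bs @ [b, b]) \<Longrightarrow> spec a (bs @ [b])"
  by (rule mssD[THEN conjunct2, THEN conjunct2, THEN conjunct2, THEN conjunct2, THEN conjunct1, rule_format])
lemma M6: "bs \<noteq> [] \<Longrightarrow> spec a bs \<Longrightarrow> spec a (bs @ [b])"
  by (rule mssD[THEN conjunct2, THEN conjunct2, THEN conjunct2, THEN conjunct2, THEN conjunct2, THEN conjunct1, rule_format])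
lemma M7: "bs \<noteq> [] \<Longrightarrow> spec a bs \<Longrightarrow> spec a1 bs \<Longrightarrow> spec (sup a a1) bs"
  by (rule mssD[THEN conjunct2, THEN conjunct2, THEN conjunct2, THEN conjunct2, THEN conjunct2, THEN conjunct2, rule_format])

lemma M4': "spec a bs \<Longrightarrow> mset cs = mset bs \<Longrightarrow> bs \<noteq> [] \<Longrightarrow> spec a cs"
  using M4 by blast

lemma rem1: assumes "spec a (l@[b])" "b \<in> set l" shows "spec a l"
proof -
  have m: "mset (remove1 b l @ [b,b]) = mset (l@[b])"
    using assms(2) by (simp add: insert_DiffM)
  have "spec a (remove1 b l @ [b,b])" by (rule M4[OF _ m assms(1)]) simp
  then have "spec a (remove1 b l @ [b])" by (rule M5)
  moreover have "mset l = mset (remove1 b l @ [b])" using assms(2) by (simp add: insert_DiffM)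
  ultimately show ?thesis by (rule M4'[of a "remove1 b l @ [b]"]) auto
qed

lemma remm: "spec a (l@m) \<Longrightarrow> set m \<subseteq> set l \<Longrightarrow> spec a l"
proof (induction m rule: rev_induct)
  case Nil then show ?case by simp
next
  case (snoc x m)
  have "spec a ((l@m)@[x])" using snoc.prems by simp
  then have "spec a (l@m)" by (rule rem1) (use snoc.prems in auto)
  then show ?case using snoc by auto
qed

lemma addm: "l \<noteq> [] \<Longrightarrow> spec a l \<Longrightarrow> spec a (l@m)"
proof (induction m rule: rev_induct)
  case Nil then show ?case by simp
next
  case (snoc x m)
  then have "spec a ((l@m)@[x])" by (intro M6) auto
  then show ?case by simp
qed

lemma mono: assumes "spec a xs" "xs \<noteq> []" "set xs \<subseteq> set ys" shows "spec a ys"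
proof -
  have "spec a (xs@ys)" using addm assms by blast
  then have "spec a (ys@xs)" by (rule M4') (use assms in auto)
  then show ?thesis using remm assms by blast
qed

lemma replace: "spec d (xs@ys) \<Longrightarrow> \<forall>x\<in>set xs. \<exists>y\<in>F. spec x [y] \<Longrightarrow>
   \<exists>zs. length zs = length xs \<and> set zs \<subseteq> F \<and> spec d (zs@ys)"
proof (induction xs arbitrary: ys)
  case Nil then show ?case by simp
next
  case (Cons x xs)
  obtain y where y: "y \<in> F" "spec x [y]" using Cons.prems by auto
  have "spec d (y # (xs@ys))" using M2 Cons.prems(1) y(2) by simp
  then have "spec d (xs @ (y#ys))" by (rule M4') auto
  then obtain zs where zs: "length zs = length xs" "set zs \<subseteq> F" "spec d (zs @ y # ys)"
    using Cons.IH Cons.prems(2) by force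
  have "spec d ((y#zs)@ys)" using zs(3) by (rule M4') auto
  then show ?case using zs y by (intro exI[of _ "y#zs"]) auto
qed

definition Sp where "Sp d D \<longleftrightarrow> (\<exists>ds. ds \<noteq> [] \<and> set ds = D \<and> spec d ds)"

lemma Sp_trans: assumes "Sp d D" "\<forall>x\<in>D. \<exists>y\<in>F. spec x [y]" "finite F" shows "Sp d F"
proof -
  obtain ds where ds: "ds \<noteq> []" "set ds = D" "spec d ds" using assms(1) Sp_def by auto
  obtain zs where zs: "length zs = length ds" "set zs \<subseteq> F" "spec d zs"
    using replace[of d ds "[]" F] ds assms(2) by auto
  obtain fs where fs: "set fs = F" using assms(3) finite_list by blast
  have "zs \<noteq> []" using zs ds by auto
  then have "spec d fs" using mono zs fs by blast
  moreover have "fs \<noteq> []" using \<open>zs \<noteq> []\<close> zs fs by auto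
  ultimately show ?thesis unfolding Sp_def using fs by blast
qed

lemma Sp_mono: "Sp d D \<Longrightarrow> D \<subseteq> F \<Longrightarrow> finite F \<Longrightarrow> Sp d F"
  using Sp_trans[of d D F] M1 by blast

lemma Sp_join: assumes "Sp d D" "Sp e D" shows "Sp (sup d e) D"
proof -
  obtain ds where ds: "ds \<noteq> []" "set ds = D" "spec d ds" using assms(1) Sp_def by auto
  obtain es where es: "es \<noteq> []" "set es = D" "spec e es" using assms(2) Sp_def by auto
  have "spec e ds" using mono es ds by blast
  then show ?thesis using M7 ds Sp_def by blast
qed

lemma Sp_refl: "d \<in> D \<Longrightarrow> finite D \<Longrightarrow> Sp d D"
proof -
  assume a: "d \<in> D" "finite D"
  have "Sp d {d}" unfolding Sp_def using M1 by (intro exI[of _ "[d]"]) auto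
  then show "Sp d D" using Sp_mono a by blast
qed

lemma Sp_single: "Sp d {t} \<longleftrightarrow> spec d [t]"
proof
  assume "Sp d {t}"
  then obtain ds where ds: "ds \<noteq> []" "set ds = {t}" "spec d ds" using Sp_def by auto
  have "set ds \<subseteq> set [t]" using ds(2) by simp
  then show "spec d [t]" using mono[of d ds "[t]"] ds(1,3) by blast
next
  assume "spec d [t]" then show "Sp d {t}" unfolding Sp_def by (intro exI[of _ "[t]"]) auto
qed

lemma le_iff: assumes "finite D"
  shows "mss_le spec (a,B) (c,D) \<longleftrightarrow>
     (a \<le> c \<or> (\<exists>d. Sp d D \<and> a \<le> sup c d)) \<and> (\<forall>b\<in>B. \<exists>d\<in>D. spec b [d])"
proof -
  have "(if D = {} then a \<le> c
         else (\<exists>d ds. set ds = D \<and> distinct ds \<and> spec d ds \<and> a \<le> sup c d))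
        \<longleftrightarrow> (a \<le> c \<or> (\<exists>d. Sp d D \<and> a \<le> sup c d))"
  proof (cases "D = {}")
    case True
    then show ?thesis unfolding Sp_def by auto
  next
    case False
    show ?thesis
    proof
      assume "if D = {} then a \<le> c
         else (\<exists>d ds. set ds = D \<and> distinct ds \<and> spec d ds \<and> a \<le> sup c d)"
      then show "a \<le> c \<or> (\<exists>d. Sp d D \<and> a \<le> sup c d)"
        using False unfolding Sp_def by auto
    next
      assume h: "a \<le> c \<or> (\<exists>d. Sp d D \<and> a \<le> sup c d)"
      have "\<exists>d. Sp d D \<and> a \<le> sup c d"
      proof (cases "a \<le> c")
        case True
        obtain d where "d \<in> D" using False by auto
        then show ?thesis using Sp_refl assms True le_supI1 by blast
      qed (use h in auto)
      then obtain d ds where d: "ds \<noteq> []" "set ds = D" "spec d ds" "a \<le> sup c d"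
        unfolding Sp_def by auto
      have "spec d (remdups ds)" using mono[of d ds "remdups ds"] d by auto
      then show "if D = {} then a \<le> c
         else (\<exists>d ds. set ds = D \<and> distinct ds \<and> spec d ds \<and> a \<le> sup c d)"
        using d False \<open>spec d (remdups ds)\<close> by (simp only: if_False) (metis distinct_remdups set_remdups)
    qed
  qed
  then show ?thesis unfolding mss_le_def by simp
qed


lemma fold_ub: "finite B \<Longrightarrow> (a::'a) \<le> Finite_Set.fold sup a B \<and> (\<forall>b\<in>B. b \<le> Finite_Set.fold sup a B)"
proof (induction B rule: finite_induct)
  case empty then show ?case by simp
next
  case (insert x F)
  have e: "Finite_Set.fold sup a (insert x F) = sup x (Finite_Set.fold sup a F)"
    using comp_fun_idem_on.fold_insert_idem[OF comp_fun_idem_sup[unfolded comp_fun_idem_def'], of x F a] insert(1) by simp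
  show ?case unfolding e using insert(3) by (auto intro: le_supI2)
qed

lemma fold_spec: "finite B \<Longrightarrow> spec (a::'a) [t] \<Longrightarrow> \<forall>b\<in>B. spec b [t] \<Longrightarrow> spec (Finite_Set.fold sup a B) [t]"
proof (induction B rule: finite_induct)
  case empty then show ?case by simp
next
  case (insert x F)
  have e: "Finite_Set.fold sup a (insert x F) = sup x (Finite_Set.fold sup a F)"
    using comp_fun_idem_on.fold_insert_idem[OF comp_fun_idem_sup[unfolded comp_fun_idem_def'], of x F a] insert(1) by simp
  show ?case unfolding e using insert M7[of "[t]"] by simp
qed

lemma spec_below: "x \<le> t \<Longrightarrow> spec x [t]"
  using M3[of "[t]" x t] M1 by simp

lemma K_le: assumes fB: "finite B" and fD: "finite D" and le: "mss_le spec (a,B) (c,D)"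
  shows "mss_le spec (mss_K (a,B)) (mss_K (c,D))"
proof -
  define \<beta> where "\<beta> = Finite_Set.fold sup a B"
  define \<delta> where "\<delta> = Finite_Set.fold sup c D"
  have ub: "c \<le> \<delta>" "\<forall>x\<in>D. x \<le> \<delta>" using fold_ub[OF fD, of c] \<delta>_def by auto
  have Dd: "\<forall>x\<in>D. spec x [\<delta>]" using ub spec_below by blast
  have le': "(a \<le> c \<or> (\<exists>d. Sp d D \<and> a \<le> sup c d)) \<and> (\<forall>b\<in>B. \<exists>d\<in>D. spec b [d])"
    using le le_iff[OF fD] by blast
  have sa: "spec a [\<delta>]"
  proof (cases "a \<le> c")
    case True
    then show ?thesis using ub(1) spec_below order_trans by blast
  next
    case False
    then obtain d where d: "Sp d D" "a \<le> sup c d" using le' by blast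
    have "Sp d {\<delta>}" using Sp_trans[OF d(1), of "{\<delta>}"] Dd by auto
    then have "spec d [\<delta>]" using Sp_single by blast
    then have "spec (sup c d) [\<delta>]" using M7[of "[\<delta>]" c] spec_below ub(1) by simp
    then show ?thesis using M3[of "[\<delta>]" a] d(2) by simp
  qed
  have sb: "\<forall>b\<in>B. spec b [\<delta>]"
  proof
    fix b assume "b \<in> B"
    then obtain d where "d \<in> D" "spec b [d]" using le' by blast
    then show "spec b [\<delta>]" using M2[of b d "[]" \<delta>] Dd by simp
  qed
  have sbeta: "spec \<beta> [\<delta>]" using fold_spec[OF fB sa sb] \<beta>_def by simp
  have "a \<le> sup c \<beta>" using fold_ub[OF fB, of a] \<beta>_def by (auto intro: le_supI2)
  then have "mss_le spec (a, {\<beta>}) (c, {\<delta>})"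
    using le_iff[of "{\<delta>}" a "{\<beta>}" c] sbeta Sp_single by blast
  moreover have "mss_K (a,B) = (a, {\<beta>})" "mss_K (c,D) = (c, {\<delta>})"
    unfolding mss_K_def \<beta>_def \<delta>_def by simp_all
  ultimately show ?thesis by simp
qed

lemma le_trans: assumes fD: "finite D" and fF: "finite F"
  and h1: "mss_le spec (a,B) (c,D)" and h2: "mss_le spec (c,D) (e,F)"
  shows "mss_le spec (a,B) (e,F)"
proof -
  have A: "(a \<le> c \<or> (\<exists>d. Sp d D \<and> a \<le> sup c d))" "\<forall>b\<in>B. \<exists>d\<in>D. spec b [d]"
    using h1 le_iff[OF fD] by blast+
  have C: "(c \<le> e \<or> (\<exists>f. Sp f F \<and> c \<le> sup e f))" "\<forall>b\<in>D. \<exists>d\<in>F. spec b [d]"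
    using h2 le_iff[OF fF] by blast+
  have cl2: "\<forall>b\<in>B. \<exists>d\<in>F. spec b [d]"
  proof
    fix b assume "b \<in> B"
    then obtain d where d: "d \<in> D" "spec b [d]" using A(2) by blast
    then obtain f where f: "f \<in> F" "spec d [f]" using C(2) by blast
    have "spec b [f]" using M2[of b d "[]" f] d f by simp
    then show "\<exists>d\<in>F. spec b [d]" using f by blast
  qed
  have cl1: "a \<le> e \<or> (\<exists>g. Sp g F \<and> a \<le> sup e g)"
  proof (cases "a \<le> c")
    case True
    show ?thesis
    proof (cases "c \<le> e")
      case True then show ?thesis using \<open>a \<le> c\<close> by auto
    next
      case False
      then obtain f where "Sp f F" "c \<le> sup e f" using C by blast
      then have "a \<le> sup e f" using \<open>a \<le> c\<close> by (meson order_trans)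
      then show ?thesis using \<open>Sp f F\<close> by blast
    qed
  next
    case False
    then obtain d where d: "Sp d D" "a \<le> sup c d" using A by blast
    have dF: "Sp d F" using Sp_trans[OF d(1) C(2) fF] .
    show ?thesis
    proof (cases "c \<le> e")
      case True
      have "a \<le> sup e d" using d(2) True by (rule l0)
      then show ?thesis using dF by blast
    next
      case False
      then obtain f where f: "Sp f F" "c \<le> sup e f" using C by blast
      have "a \<le> sup e (sup f d)" using d(2) f(2) by (rule l1)
      then show ?thesis using Sp_join[OF f(1) dF] by blast
    qed
  qed
  show ?thesis using le_iff[OF fF] cl1 cl2 by blast
qed

lemma le_mono: assumes "a \<le> a'" "B \<subseteq> B'" "finite B'" shows "mss_le spec (a,B) (a',B')"
  using assms le_iff[OF assms(3)] M1 by blast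

lemma join_mono: assumes fB: "finite B'" and fD: "finite D'"
  and h1: "mss_le spec (a,B) (a',B')" and h2: "mss_le spec (c,D) (c',D')"
  shows "mss_le spec (sup a c, B \<union> D) (sup a' c', B' \<union> D')"
proof -
  have fU: "finite (B' \<union> D')" using fB fD by simp
  have A: "(a \<le> a' \<or> (\<exists>d. Sp d B' \<and> a \<le> sup a' d))" "\<forall>b\<in>B. \<exists>d\<in>B'. spec b [d]"
    using h1 le_iff[OF fB] by blast+
  have C: "(c \<le> c' \<or> (\<exists>d. Sp d D' \<and> c \<le> sup c' d))" "\<forall>b\<in>D. \<exists>d\<in>D'. spec b [d]"
    using h2 le_iff[OF fD] by blast+
  have cl2: "\<forall>b\<in>B \<union> D. \<exists>d\<in>B' \<union> D'. spec b [d]" using A(2) C(2) by blast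
  have cl1: "sup a c \<le> sup a' c' \<or> (\<exists>g. Sp g (B' \<union> D') \<and> sup a c \<le> sup (sup a' c') g)"
  proof (cases "a \<le> a'")
    case True
    show ?thesis
    proof (cases "c \<le> c'")
      case True then show ?thesis using \<open>a \<le> a'\<close> by (auto intro: le_supI1 le_supI2)
    next
      case False
      then obtain d where d: "Sp d D'" "c \<le> sup c' d" using C by blast
      have "Sp d (B' \<union> D')" using Sp_mono[OF d(1) _ fU] by blast
      moreover have "sup a c \<le> sup (sup a' c') d" using True d(2) by (rule l3)
      ultimately show ?thesis by blast
    qed
  next
    case False
    then obtain d where d: "Sp d B'" "a \<le> sup a' d" using A by blast
    have dU: "Sp d (B' \<union> D')" using Sp_mono[OF d(1) _ fU] by blast
    show ?thesis
    proof (cases "c \<le> c'")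
      case True
      have "sup a c \<le> sup (sup a' c') d" using d(2) True by (rule l2)
      then show ?thesis using dU by blast
    next
      case False
      then obtain f where f: "Sp f D'" "c \<le> sup c' f" using C by blast
      have fU': "Sp f (B' \<union> D')" using Sp_mono[OF f(1) _ fU] by blast
      have "sup a c \<le> sup (sup a' c') (sup d f)" using d(2) f(2) by (rule l4)
      then show ?thesis using Sp_join[OF dU fU'] by blast
    qed
  qed
  show ?thesis using le_iff[OF fU] cl1 cl2 by blast
qed

lemma join_le: assumes fD: "finite D" and h: "mss_le spec (a,B) (c,D)"
  shows "mss_le spec (sup a c, B \<union> D) (c,D)"
proof -
  have A: "(a \<le> c \<or> (\<exists>d. Sp d D \<and> a \<le> sup c d))" "\<forall>b\<in>B. \<exists>d\<in>D. spec b [d]"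
    using h le_iff[OF fD] by blast+
  have "sup a c \<le> c \<or> (\<exists>d. Sp d D \<and> sup a c \<le> sup c d)"
    using A(1) by (auto intro: le_supI1 le_supI2)
  moreover have "\<forall>b\<in>B \<union> D. \<exists>d\<in>D. spec b [d]" using A(2) M1 by blast
  ultimately show ?thesis using le_iff[OF fD] by blast
qed

end

lemma finpairs_iff: "(a, B) \<in> finpairs \<longleftrightarrow> finite B"
  by (simp add: finpairs_def)

theorem lemma4p5:
  fixes spec :: "'a::semilattice_sup \<Rightarrow> 'a list \<Rightarrow> bool"
  assumes "mss spec"
  shows "(\<forall>x\<in>finpairs. mss_le spec x x)
    \<and> (\<forall>x\<in>finpairs. \<forall>y\<in>finpairs. \<forall>z\<in>finpairs.
          mss_le spec x y \<longrightarrow> mss_le spec y z \<longrightarrow> mss_le spec x z)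
    \<and> equiv finpairs (mss_sim spec)
    \<and> (\<forall>x y. (x, y) \<in> mss_sim spec \<longrightarrow> (mss_K x, mss_K y) \<in> mss_sim spec)
    \<and> (\<forall>x x' y y'. (x, x') \<in> mss_sim spec \<longrightarrow> (y, y') \<in> mss_sim spec \<longrightarrow>
          (mss_join x y, mss_join x' y') \<in> mss_sim spec)
    \<and> (\<forall>x\<in>finpairs. \<forall>y\<in>finpairs.
          (mss_join x y, y) \<in> mss_sim spec \<longleftrightarrow> mss_le spec x y)"
proof -
  interpret mssl spec by (rule mssl.intro[OF assms])
  have R: "\<forall>x\<in>finpairs. mss_le spec x x"
  proof
    fix x :: "'a \<times> 'a set" assume "x \<in> finpairs"
    then obtain a B where "x = (a,B)" "finite B" by (cases x) (auto simp: finpairs_def)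
    then show "mss_le spec x x" using le_mono[of a a B B] by simp
  qed
  have T: "\<forall>x\<in>finpairs. \<forall>y\<in>finpairs. \<forall>z\<in>finpairs.
          mss_le spec x y \<longrightarrow> mss_le spec y z \<longrightarrow> mss_le spec x z"
  proof (intro ballI impI)
    fix x y z :: "'a \<times> 'a set" assume h: "x \<in> finpairs" "y \<in> finpairs" "z \<in> finpairs"
      "mss_le spec x y" "mss_le spec y z"
    obtain a B where x: "x = (a,B)" by (cases x)
    obtain c D where y: "y = (c,D)" "finite D" using h(2) by (cases y) (auto simp: finpairs_def)
    obtain e F where z: "z = (e,F)" "finite F" using h(3) by (cases z) (auto simp: finpairs_def)
    show "mss_le spec x z" using le_trans[OF y(2) z(2)] h(4,5) x y z by simp
  qed
  have E: "equiv finpairs (mss_sim spec)"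
  proof (rule equivI)
    show "refl_on finpairs (mss_sim spec)"
      using R unfolding refl_on_def mss_sim_def by auto
    show "sym (mss_sim spec)" unfolding sym_def mss_sim_def by auto
    show "trans (mss_sim spec)" unfolding trans_def mss_sim_def using T by blast
    show "mss_sim spec \<subseteq> finpairs \<times> finpairs" unfolding mss_sim_def by auto
  qed
  have K: "\<forall>x y. (x, y) \<in> mss_sim spec \<longrightarrow> (mss_K x, mss_K y) \<in> mss_sim spec"
  proof (intro allI impI)
    fix x y assume h: "(x, y) \<in> mss_sim spec"
    obtain a B c D where xy: "x = (a,B)" "y = (c,D)" by (cases x, cases y) auto
    have f: "finite B" "finite D" using h xy by (auto simp: mss_sim_def finpairs_def)
    have "mss_le spec x y" "mss_le spec y x" using h by (auto simp: mss_sim_def)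
    then have "mss_le spec (mss_K x) (mss_K y)" "mss_le spec (mss_K y) (mss_K x)"
      using K_le f xy by auto
    moreover have "mss_K x \<in> finpairs" "mss_K y \<in> finpairs"
      unfolding xy mss_K_def by (auto simp: finpairs_def)
    ultimately show "(mss_K x, mss_K y) \<in> mss_sim spec" by (auto simp: mss_sim_def)
  qed
  have J: "\<forall>x x' y y'. (x, x') \<in> mss_sim spec \<longrightarrow> (y, y') \<in> mss_sim spec \<longrightarrow>
          (mss_join x y, mss_join x' y') \<in> mss_sim spec"
  proof (intro allI impI)
    fix x x' y y' assume h1: "(x, x') \<in> mss_sim spec" and h2: "(y, y') \<in> mss_sim spec"
    obtain a B a' B' where xx: "x = (a,B)" "x' = (a',B')" by (cases x, cases x') auto
    obtain c D c' D' where yy: "y = (c,D)" "y' = (c',D')" by (cases y, cases y') auto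
    have f: "finite B" "finite B'" "finite D" "finite D'"
      using h1 h2 xx yy by (auto simp: mss_sim_def finpairs_def)
    have l: "mss_le spec (a,B) (a',B')" "mss_le spec (a',B') (a,B)"
      "mss_le spec (c,D) (c',D')" "mss_le spec (c',D') (c,D)"
      using h1 h2 xx yy by (auto simp: mss_sim_def)
    show "(mss_join x y, mss_join x' y') \<in> mss_sim spec"
      unfolding xx yy mss_join_def mss_sim_def
      using join_mono[OF f(2) f(4) l(1) l(3)] join_mono[OF f(1) f(3) l(2) l(4)] f
      by (auto simp: finpairs_def)
  qed
  have L: "\<forall>x\<in>finpairs. \<forall>y\<in>finpairs.
          (mss_join x y, y) \<in> mss_sim spec \<longleftrightarrow> mss_le spec x y"
  proof (intro ballI)
    fix x y :: "'a \<times> 'a set" assume hx: "x \<in> finpairs" and hy: "y \<in> finpairs"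
    obtain a B c D where xy: "x = (a,B)" "y = (c,D)" by (cases x, cases y) auto
    have f: "finite B" "finite D" using hx hy xy by (auto simp: finpairs_def)
    show "(mss_join x y, y) \<in> mss_sim spec \<longleftrightarrow> mss_le spec x y"
    proof
      assume "(mss_join x y, y) \<in> mss_sim spec"
      then have "mss_le spec (sup a c, B \<union> D) (c, D)"
        unfolding xy mss_join_def mss_sim_def by auto
      moreover have "mss_le spec (a,B) (sup a c, B \<union> D)"
        using le_mono f by simp
      ultimately show "mss_le spec x y" unfolding xy using le_trans f by blast
    next
      assume "mss_le spec x y"
      then have "mss_le spec (sup a c, B \<union> D) (c, D)" using join_le f xy by simp
      moreover have "mss_le spec (c, D) (sup a c, B \<union> D)" using le_mono f by simp
      ultimately show "(mss_join x y, y) \<in> mss_sim spec"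
        unfolding xy mss_join_def mss_sim_def using f by (auto simp: finpairs_def)
    qed
  qed
  show ?thesis using R T E K J L by blast
qed

end
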